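(* Let $\alpha\in[0,1)$, $\sigma=\frac{1+\alpha}{2}$ (so $\rho:=\frac{1-\alpha}{1-\sigma}=2$), $\mu=\frac{8}{\sqrt{1-\alpha}}$, and let $\omega:\mathbb{R}_+\to(0,\infty)$ be non-decreasing. Let $(\lambda_k),(x_k),(y_k)$ be generated by the acceleration framework (context) up to $K$ for convex differentiable $g$ with minimizer $x^*$, with $\delta\le\frac{\|x^*\|}{\mu A_K}$ and $\lambda_k\ge\frac{1}{\rho\,\omega(\|y_k-\tilde x_{k-1}\|)}$ for all $k\in[K]$. Then for all $k\in[K]$ and all integers $J$ with $0<J<k/2$, \[ A_k\ge\min\left\{\frac{4^J}{\rho\,\omega(\mu\|x^*\|/4)},\ \frac{(k/J)^2}{16\rho\,\omega\!\left(\frac{4\mu\|x^*\|}{(k/J)^{3/2}}\right)}\right\}. \] Further, if $\|x^*\|\le R$ then $A_k\ge\frac{1}{2\omega(2\mu R)}$ for all $k\in[K]$.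
   Context: Acceleration framework: let $g:\mathbb{R}^d\to\mathbb{R}$ be convex and differentiable, $\sigma\in(0,1)$, $\delta\ge0$, $K\ge1$. Sequences $(\lambda_k)_{k=1}^K\subset(0,\infty)$ and $(x_k)_{k=0}^K,(y_k)_{k=0}^K\subset\mathbb{R}^d$ are generated by the framework if $x_0=y_0=0$, $A_0=0$, and for each $k=0,\dots,K-1$, with $a_{k+1}=\frac12\big[\lambda_{k+1}+\sqrt{\lambda_{k+1}^2+4\lambda_{k+1}A_k}\big]$, $A_{k+1}=A_k+a_{k+1}$, $\tilde x_k=\frac{A_k}{A_{k+1}}y_k+\frac{a_{k+1}}{A_{k+1}}x_k$, one has $\|\lambda_{k+1}\nabla g(y_{k+1})+y_{k+1}-\tilde x_k\|\le\sigma\|y_{k+1}-\tilde x_k\|+\lambda_{k+1}\delta$ and $\|x_{k+1}-(x_k-a_{k+1}\nabla g(y_{k+1}))\|\le a_{k+1}\delta$. (Note $\lambda_{k+1}A_{k+1}=a_{k+1}^2$.) *)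

theory Defs
  imports "HOL-Analysis.Analysis"
begin

fun acc_A :: "(nat \<Rightarrow> real) \<Rightarrow> nat \<Rightarrow> real" where
  "acc_A lam 0 = 0"
| "acc_A lam (Suc k) = acc_A lam k
     + (lam (Suc k) + sqrt ((lam (Suc k))\<^sup>2 + 4 * lam (Suc k) * acc_A lam k)) / 2"

text \<open>a_{k+1} = (lambda_{k+1} + sqrt(lambda_{k+1}^2 + 4 lambda_{k+1} A_k))/2; a_0 is unused (set to 0).\<close>
fun acc_a :: "(nat \<Rightarrow> real) \<Rightarrow> nat \<Rightarrow> real" where
  "acc_a lam 0 = 0"
| "acc_a lam (Suc k) = (lam (Suc k) + sqrt ((lam (Suc k))\<^sup>2 + 4 * lam (Suc k) * acc_A lam k)) / 2"

definition acc_xt :: "(nat \<Rightarrow> real) \<Rightarrow> (nat \<Rightarrow> 'a::real_vector) \<Rightarrow> (nat \<Rightarrow> 'a) \<Rightarrow> nat \<Rightarrow> 'a" where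
  "acc_xt lam x y k =
     (acc_A lam k / acc_A lam (Suc k)) *\<^sub>R y k + (acc_a lam (Suc k) / acc_A lam (Suc k)) *\<^sub>R x k"

definition acc_framework ::
  "('a::real_normed_vector \<Rightarrow> 'a) \<Rightarrow> real \<Rightarrow> real \<Rightarrow> nat \<Rightarrow> (nat \<Rightarrow> real) \<Rightarrow> (nat \<Rightarrow> 'a) \<Rightarrow> (nat \<Rightarrow> 'a) \<Rightarrow> bool" where
  "acc_framework G \<sigma> \<delta> K lam x y \<longleftrightarrow>
     x 0 = 0 \<and> y 0 = 0 \<and> (\<forall>k\<in>{1..K}. lam k > 0) \<and>
     (\<forall>k<K.
        norm (lam (Suc k) *\<^sub>R G (y (Suc k)) + y (Suc k) - acc_xt lam x y k)
          \<le> \<sigma> * norm (y (Suc k) - acc_xt lam x y k) + lam (Suc k) * \<delta>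
      \<and> norm (x (Suc k) - (x k - acc_a lam (Suc k) *\<^sub>R G (y (Suc k))))
          \<le> acc_a lam (Suc k) * \<delta>)"

end

theory Submission
  imports Defs
begin


lemma convex_tangent:
  fixes g :: "'a::euclidean_space \<Rightarrow> real" and G :: "'a \<Rightarrow> 'a"
  assumes convex: "convex_on UNIV g"
    and grad: "\<forall>z. (g has_derivative (\<lambda>h. G z \<bullet> h)) (at z)"
  shows "g z \<ge> g w + G w \<bullet> (z - w)"
proof -
  define d where "d = z - w"
  define \<phi> where "\<phi> = (\<lambda>t::real. g (w + t *\<^sub>R d))"
  have cphi: "convex_on UNIV \<phi>"
  proof (rule convex_onI)
    fix t a b :: real assume t: "t > 0" "t < 1"
    have "w + ((1 - t) *\<^sub>R a + t *\<^sub>R b) *\<^sub>R d = (1 - t) *\<^sub>R (w + a *\<^sub>R d) + t *\<^sub>R (w + b *\<^sub>R d)"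
      by (simp add: algebra_simps)
    then show "\<phi> ((1 - t) *\<^sub>R a + t *\<^sub>R b) \<le> (1 - t) * \<phi> a + t * \<phi> b"
      unfolding \<phi>_def using convex_onD[OF convex, of t] t by auto
  qed auto
  have d1: "((\<lambda>t. w + t *\<^sub>R d) has_derivative (\<lambda>t. t *\<^sub>R d)) (at 0)"
    by (auto intro!: derivative_eq_intros)
  have g0: "(g has_derivative (\<lambda>h. G w \<bullet> h)) (at (w + 0 *\<^sub>R d))"
    using grad by simp
  have "((\<lambda>t. g (w + t *\<^sub>R d)) has_derivative (\<lambda>t. G w \<bullet> (t *\<^sub>R d))) (at 0)"
    by (rule has_derivative_compose[OF d1 g0])
  then have "(\<phi> has_derivative (\<lambda>t. (G w \<bullet> d) * t)) (at 0)"
    by (simp add: \<phi>_def mult.commute)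
  then have "(\<phi> has_field_derivative (G w \<bullet> d)) (at 0 within UNIV)"
    by (simp add: has_field_derivative_def)
  from convex_on_imp_above_tangent[OF cphi _ _ _ this, of 1]
  have "\<phi> 1 - \<phi> 0 \<ge> (G w \<bullet> d) * (1 - 0)" by auto
  then show ?thesis by (simp add: \<phi>_def d_def)
qed



lemma step_ineq:
  fixes v y yk xk xt xs :: "'a::real_inner" and Ak a A' lam gy gyk gxs bnd :: real
  assumes Ak: "Ak \<ge> 0" and a: "a > 0" and lam: "lam > 0" and A': "A' = Ak + a"
    and asq: "a\<^sup>2 = lam * A'"
    and xt: "A' *\<^sub>R xt = Ak *\<^sub>R yk + a *\<^sub>R xk"
    and t1: "gyk \<ge> gy + v \<bullet> (yk - y)" and t2: "gxs \<ge> gy + v \<bullet> (xs - y)"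
    and e: "norm (lam *\<^sub>R v + y - xt) \<le> bnd"
  shows "(norm (xk - a *\<^sub>R v - xs))\<^sup>2 + 2*A'*(gy - gxs)
     \<le> (norm (xk - xs))\<^sup>2 + 2*Ak*(gyk - gxs) + (A'/lam)*(bnd\<^sup>2 - (norm (y - xt))\<^sup>2)"
proof -
  have e2: "(norm (lam *\<^sub>R v + y - xt))\<^sup>2 = lam\<^sup>2*(v\<bullet>v) + 2*lam*(v\<bullet>y) - 2*lam*(v\<bullet>xt) + (norm (y - xt))\<^sup>2"
    unfolding power2_norm_eq_inner
    by (simp add: inner_diff_left inner_diff_right inner_add_left inner_add_right inner_commute power2_eq_square algebra_simps)
  have n1: "(norm (xk - a *\<^sub>R v - xs))\<^sup>2 = (norm (xk - xs))\<^sup>2 - 2*a*(v\<bullet>xk) + 2*a*(v\<bullet>xs) + a\<^sup>2*(v\<bullet>v)"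
    unfolding power2_norm_eq_inner
    by (simp add: inner_diff_left inner_diff_right inner_add_left inner_add_right inner_commute power2_eq_square algebra_simps)
  have xi: "a*(v\<bullet>xk) = A'*(v\<bullet>xt) - Ak*(v\<bullet>yk)"
  proof -
    have "v \<bullet> (A' *\<^sub>R xt) = v \<bullet> (Ak *\<^sub>R yk + a *\<^sub>R xk)" using xt by simp
    then show ?thesis by (simp add: inner_add_right)
  qed
  have ne: "(norm (lam *\<^sub>R v + y - xt))\<^sup>2 \<le> bnd\<^sup>2"
    using e by (meson norm_ge_zero power_mono)
  have Apos: "A' > 0" using Ak a A' by simp
  have m: "(A'/lam)*((norm (lam *\<^sub>R v + y - xt))\<^sup>2 - (norm (y - xt))\<^sup>2) \<le> (A'/lam)*(bnd\<^sup>2 - (norm (y - xt))\<^sup>2)"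
    using ne Apos lam by (intro mult_left_mono) auto
  have m2: "(A'/lam)*((norm (lam *\<^sub>R v + y - xt))\<^sup>2 - (norm (y - xt))\<^sup>2) = A'*lam*(v\<bullet>v) + 2*A'*(v\<bullet>y) - 2*A'*(v\<bullet>xt)"
    unfolding e2 using lam by (simp add: field_simps power2_eq_square)
  have t1': "Ak*(v\<bullet>yk) - Ak*(v\<bullet>y) + Ak*gy - Ak*gyk \<le> 0"
  proof -
    have "Ak * (gy + v \<bullet> (yk - y)) \<le> Ak * gyk" using t1 Ak by (rule mult_left_mono)
    then show ?thesis by (simp add: inner_diff_right algebra_simps)
  qed
  have t2': "a*(v\<bullet>xs) - a*(v\<bullet>y) + a*gy - a*gxs \<le> 0"
  proof -
    have "a * (gy + v \<bullet> (xs - y)) \<le> a * gxs" using t2 a by (intro mult_left_mono) auto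
    then show ?thesis by (simp add: inner_diff_right algebra_simps)
  qed
  have as2: "a\<^sup>2*(v\<bullet>v) = A'*lam*(v\<bullet>v)" using asq by simp
  show ?thesis
    using m m2 n1 xi t1' t2' as2 unfolding A' by (simp add: algebra_simps)
qed



lemma A_Suc: "acc_A lam (Suc k) = acc_A lam k + acc_a lam (Suc k)"
  by simp

lemma a_pos: assumes "lam (Suc k) > 0" "acc_A lam k \<ge> 0" shows "acc_a lam (Suc k) > 0"
  using assms by (simp add: add_pos_nonneg)

lemma A_nonneg: "(\<forall>i\<in>{1..n}. lam i > 0) \<Longrightarrow> acc_A lam n \<ge> 0"
proof (induction n)
  case 0 then show ?case by simp
next
  case (Suc n)
  then have "acc_A lam n \<ge> 0" "lam (Suc n) > 0" by auto
  then show ?case using a_pos[of lam n] A_Suc[of lam n] by linarith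
qed

lemma A_pos: assumes h: "\<forall>i\<in>{1..n}. lam i > 0" and n1: "1 \<le> n" shows "acc_A lam n > 0"
proof (cases n)
  case 0 then show ?thesis using n1 by simp
next
  case (Suc m)
  from h have "acc_A lam m \<ge> 0" "lam (Suc m) > 0" using Suc by (auto intro!: A_nonneg)
  then have "acc_a lam (Suc m) > 0" by (intro a_pos)
  then show ?thesis unfolding Suc A_Suc using \<open>acc_A lam m \<ge> 0\<close> by linarith
qed

lemma A_mono: assumes "\<forall>i\<in>{1..n}. lam i > 0" "i \<le> j" "j \<le> n" shows "acc_A lam i \<le> acc_A lam j"
  using assms(2,3)
proof (induction j)
  case 0 then show ?case by simp
next
  case (Suc j)
  show ?case
  proof (cases "i = Suc j")
    case True then show ?thesis by simp
  next
    case False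
    then have "i \<le> j" using Suc by simp
    have "acc_A lam j \<ge> 0" "lam (Suc j) > 0" using assms(1) Suc by (auto intro!: A_nonneg)
    then show ?thesis using Suc.IH[OF \<open>i \<le> j\<close>] Suc a_pos[of lam j] A_Suc[of lam j] by linarith
  qed
qed

lemma a_sq: assumes "lam (Suc k) > 0" "acc_A lam k \<ge> 0"
  shows "(acc_a lam (Suc k))\<^sup>2 = lam (Suc k) * acc_A lam (Suc k)"
proof -
  define l where "l = lam (Suc k)"
  define A where "A = acc_A lam k"
  define s where "s = sqrt (l\<^sup>2 + 4 * l * A)"
  have s2: "s\<^sup>2 = l\<^sup>2 + 4 * l * A" unfolding s_def using assms by (simp add: l_def A_def)
  have "(acc_a lam (Suc k))\<^sup>2 = ((l + s)/2)\<^sup>2" by (simp add: l_def A_def s_def)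
  also have "\<dots> = l * (A + (l + s)/2)" using s2 by (simp add: power2_eq_square field_simps)
  also have "\<dots> = lam (Suc k) * acc_A lam (Suc k)" by (simp add: l_def A_def s_def)
  finally show ?thesis .
qed

lemma A_one: "acc_A lam 1 = lam 1" if "lam 1 > 0"
  using that by (simp add: power2_eq_square)

lemma sqrt_step: assumes "lam (Suc k) > 0" "acc_A lam k \<ge> 0"
  shows "sqrt (acc_A lam (Suc k)) \<ge> sqrt (acc_A lam k) + sqrt (lam (Suc k)) / 2"
proof -
  define p where "p = sqrt (acc_A lam k)"
  define q where "q = sqrt (acc_A lam (Suc k))"
  define a where "a = acc_a lam (Suc k)"
  define sl where "sl = sqrt (lam (Suc k))"
  have apos: "a > 0" using a_pos[OF assms] by (simp add: a_def)
  have A': "acc_A lam (Suc k) = acc_A lam k + a" by (simp only: a_def A_Suc)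
  have p0: "p \<ge> 0" using assms(2) by (simp add: p_def)
  have qp: "q \<ge> p" unfolding p_def q_def A' using apos assms(2) by simp
  have qpos: "q > 0" unfolding q_def A' using apos assms(2) by simp
  have p2: "p\<^sup>2 = acc_A lam k" using assms(2) by (simp add: p_def)
  have q2: "q\<^sup>2 = acc_A lam (Suc k)" using assms apos A' by (simp add: q_def)
  have "a = sqrt (a\<^sup>2)" using apos by simp
  also have "\<dots> = sl * q" using a_sq[OF assms] by (simp add: a_def sl_def q_def real_sqrt_mult)
  finally have aq: "a = sl * q" .
  have "(q - p) * (q + p) = sl * q" using p2 q2 A' aq by (simp add: power2_eq_square algebra_simps)
  moreover have "(q - p) * (q + p) \<le> (q - p) * (2 * q)" using qp by (intro mult_left_mono) auto
  ultimately have "sl * q \<le> (q - p) * 2 * q" by (simp add: algebra_simps)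
  then have "sl \<le> (q - p) * 2" using qpos by simp
  then show ?thesis by (simp add: p_def q_def sl_def)
qed



definition ss :: "(nat \<Rightarrow> real) \<Rightarrow> (nat \<Rightarrow> 'a::real_normed_vector) \<Rightarrow> (nat \<Rightarrow> 'a) \<Rightarrow> nat \<Rightarrow> real" where
  "ss lam x y i = acc_A lam i * (norm (y i - acc_xt lam x y (i - 1)))\<^sup>2 / lam i"

lemma ss_nonneg: "(\<forall>j\<in>{1..i}. lam j > 0) \<Longrightarrow> 1 \<le> i \<Longrightarrow> ss lam x y i \<ge> 0"
  unfolding ss_def using A_nonneg[of i lam] by (intro divide_nonneg_pos mult_nonneg_nonneg) auto

lemma sq_lemma:
  fixes X D D' W t :: real
  assumes "X \<ge> 0" "D' \<ge> 0" "X + D'\<^sup>2 \<le> W\<^sup>2" "W \<ge> 0" "D \<le> D' + t" "t \<ge> 0" "D \<ge> 0"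
  shows "X + D\<^sup>2 \<le> (W + t)\<^sup>2"
proof -
  have "D'\<^sup>2 \<le> W\<^sup>2" using assms by linarith
  then have "D' \<le> W" using assms by (meson power2_le_imp_le)
  have "D\<^sup>2 \<le> (D' + t)\<^sup>2" using assms by (intro power_mono) auto
  also have "\<dots> = D'\<^sup>2 + 2*t*D' + t\<^sup>2" by (simp add: power2_eq_square algebra_simps)
  finally have "X + D\<^sup>2 \<le> X + D'\<^sup>2 + 2*t*D' + t\<^sup>2" by simp
  also have "\<dots> \<le> W\<^sup>2 + 2*t*W + t\<^sup>2" using assms \<open>D' \<le> W\<close> mult_left_mono[OF \<open>D' \<le> W\<close>, of "2*t"] by linarith
  also have "\<dots> = (W + t)\<^sup>2" by (simp add: power2_eq_square algebra_simps)
  finally show ?thesis .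
qed

lemma young_step:
  fixes \<sigma> r l \<delta> A' a :: real
  assumes "0 \<le> \<sigma>" "\<sigma> < 1" "l > 0" "A' \<ge> 0" "a\<^sup>2 = l * A'"
  shows "(A'/l) * ((\<sigma> * r + l * \<delta>)\<^sup>2 - r\<^sup>2)
     \<le> - (2*(1-\<sigma>\<^sup>2)/3) * (A' * r\<^sup>2 / l) + (1 + 3*\<sigma>\<^sup>2/(1-\<sigma>\<^sup>2)) * a\<^sup>2 * \<delta>\<^sup>2"
proof -
  define \<tau> where "\<tau> = 1 - \<sigma>\<^sup>2"
  have tau: "\<tau> > 0" unfolding \<tau>_def using power_strict_mono[of \<sigma> 1 2] assms by simp
  have y: "2*\<sigma>*r*l*\<delta> \<le> (\<tau>/3)*r\<^sup>2 + 3*\<sigma>\<^sup>2*l\<^sup>2*\<delta>\<^sup>2/\<tau>"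
  proof -
    have "0 \<le> (\<tau>*r - 3*\<sigma>*l*\<delta>)\<^sup>2/(3*\<tau>)" using tau by simp
    also have "\<dots> = (\<tau>/3)*r\<^sup>2 + 3*\<sigma>\<^sup>2*l\<^sup>2*\<delta>\<^sup>2/\<tau> - 2*\<sigma>*r*l*\<delta>"
      using tau by (simp add: power2_eq_square field_simps)
    finally show ?thesis by simp
  qed
  have "(\<sigma> * r + l * \<delta>)\<^sup>2 - r\<^sup>2 = - \<tau> * r\<^sup>2 + 2*\<sigma>*r*l*\<delta> + l\<^sup>2*\<delta>\<^sup>2"
    by (simp add: \<tau>_def power2_eq_square algebra_simps)
  also have "\<dots> \<le> -(2*\<tau>/3) * r\<^sup>2 + (1 + 3*\<sigma>\<^sup>2/\<tau>) * l\<^sup>2 * \<delta>\<^sup>2"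
    using y tau by (simp add: field_simps)
  finally have h: "(\<sigma> * r + l * \<delta>)\<^sup>2 - r\<^sup>2 \<le> -(2*\<tau>/3) * r\<^sup>2 + (1 + 3*\<sigma>\<^sup>2/\<tau>) * l\<^sup>2 * \<delta>\<^sup>2" .
  have "(A'/l) * ((\<sigma> * r + l * \<delta>)\<^sup>2 - r\<^sup>2) \<le> (A'/l) * (-(2*\<tau>/3) * r\<^sup>2 + (1 + 3*\<sigma>\<^sup>2/\<tau>) * l\<^sup>2 * \<delta>\<^sup>2)"
    using h assms by (intro mult_left_mono) auto
  also have "\<dots> = - (2*\<tau>/3) * (A' * r\<^sup>2 / l) + (1 + 3*\<sigma>\<^sup>2/\<tau>) * (l * A') * \<delta>\<^sup>2"
    using assms by (simp add: power2_eq_square field_simps)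
  finally show ?thesis using assms(5) by (simp add: \<tau>_def)
qed



lemma potential:
  fixes g :: "'a::euclidean_space \<Rightarrow> real" and G :: "'a \<Rightarrow> 'a"
  assumes sig: "0 \<le> \<sigma>" "\<sigma> < 1" and delta: "0 \<le> \<delta>"
    and convex: "convex_on UNIV g"
    and grad: "\<forall>z. (g has_derivative (\<lambda>h. G z \<bullet> h)) (at z)"
    and minimizer: "\<forall>z. g xs \<le> g z"
    and fw: "acc_framework G \<sigma> \<delta> K lam x y"
  shows "k \<le> K \<Longrightarrow> (norm (x k - xs))\<^sup>2 + 2*acc_A lam k*(g (y k) - g xs)
      + (2*(1-\<sigma>\<^sup>2)/3) * (\<Sum>i\<in>{1..k}. ss lam x y i)
      \<le> (norm xs + (1 + sqrt (1 + 3*\<sigma>\<^sup>2/(1-\<sigma>\<^sup>2)))*\<delta>*acc_A lam k)\<^sup>2"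
proof (induction k)
  case 0
  have "x 0 = 0" using fw by (simp add: acc_framework_def)
  then show ?case by simp
next
  case (Suc k)
  define \<tau> where "\<tau> = 1 - \<sigma>\<^sup>2"
  define c where "c = sqrt (1 + 3*\<sigma>\<^sup>2/\<tau>)"
  have tau: "\<tau> > 0" unfolding \<tau>_def using power_strict_mono[of \<sigma> 1 2] sig by simp
  have c2: "c\<^sup>2 = 1 + 3*\<sigma>\<^sup>2/\<tau>" unfolding c_def using tau by (simp add: add_nonneg_nonneg)
  have c0: "c \<ge> 0" unfolding c_def using tau by simp
  have kK: "k < K" using Suc by simp
  have pos: "\<forall>i\<in>{1..K}. lam i > 0" using fw by (simp add: acc_framework_def)
  have posk: "\<forall>i\<in>{1..k}. lam i > 0" "\<forall>i\<in>{1..Suc k}. lam i > 0" using pos kK by auto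
  define A where "A = acc_A lam k"
  define A' where "A' = acc_A lam (Suc k)"
  define a where "a = acc_a lam (Suc k)"
  define l where "l = lam (Suc k)"
  define v where "v = G (y (Suc k))"
  define xt where "xt = acc_xt lam x y k"
  define r where "r = norm (y (Suc k) - xt)"
  define S where "S = (\<Sum>i\<in>{1..k}. ss lam x y i)"
  define \<xi> where "\<xi> = norm xs"
  have lpos: "l > 0" using pos kK by (simp add: l_def)
  have A0: "A \<ge> 0" unfolding A_def using posk(1) by (rule A_nonneg)
  have apos: "a > 0" unfolding a_def using lpos A0 by (intro a_pos) (auto simp: l_def A_def)
  have AA': "A' = A + a" by (simp only: A'_def A_def a_def A_Suc)
  have asq: "a\<^sup>2 = l * A'" unfolding a_def l_def A'_def using lpos A0 by (intro a_sq) (auto simp: l_def A_def)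
  have A'pos: "A' > 0" using AA' A0 apos by simp
  have xtd: "xt = (A/A') *\<^sub>R y k + (a/A') *\<^sub>R x k"
    unfolding xt_def acc_xt_def A_def[symmetric] A'_def[symmetric] a_def[symmetric] by (rule refl)
  have xteq: "A' *\<^sub>R xt = A *\<^sub>R y k + a *\<^sub>R x k"
    using A'pos unfolding xtd by (simp add: scaleR_add_right)
  have e: "norm (l *\<^sub>R v + y (Suc k) - xt) \<le> \<sigma> * r + l * \<delta>"
    and xe: "norm (x (Suc k) - (x k - a *\<^sub>R v)) \<le> a * \<delta>"
    using fw kK by (auto simp: acc_framework_def l_def v_def xt_def r_def a_def)
  have t1: "g (y k) \<ge> g (y (Suc k)) + v \<bullet> (y k - y (Suc k))"
    unfolding v_def by (rule convex_tangent[OF convex grad])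
  have t2: "g xs \<ge> g (y (Suc k)) + v \<bullet> (xs - y (Suc k))"
    unfolding v_def by (rule convex_tangent[OF convex grad])
  have S1: "(norm (x k - a *\<^sub>R v - xs))\<^sup>2 + 2*A'*(g (y (Suc k)) - g xs)
     \<le> (norm (x k - xs))\<^sup>2 + 2*A*(g (y k) - g xs) + (A'/l)*((\<sigma> * r + l * \<delta>)\<^sup>2 - r\<^sup>2)"
    unfolding r_def by (rule step_ineq[OF A0 apos lpos AA' asq xteq t1 t2 e[unfolded r_def]])
  have ssk: "ss lam x y (Suc k) = A' * r\<^sup>2 / l"
    by (simp add: ss_def A'_def r_def xt_def l_def)
  have Y: "(A'/l) * ((\<sigma> * r + l * \<delta>)\<^sup>2 - r\<^sup>2) \<le> - (2*\<tau>/3) * ss lam x y (Suc k) + c\<^sup>2 * a\<^sup>2 * \<delta>\<^sup>2"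
    using young_step[OF sig lpos _ asq, of r \<delta>] A'pos ssk c2 by (simp add: \<tau>_def)
  define D' where "D' = norm (x k - a *\<^sub>R v - xs)"
  define X where "X = 2*A'*(g (y (Suc k)) - g xs) + (2*\<tau>/3) * (S + ss lam x y (Suc k))"
  have IH: "(norm (x k - xs))\<^sup>2 + 2*A*(g (y k) - g xs) + (2*\<tau>/3) * S \<le> (\<xi> + (1 + c)*\<delta>*A)\<^sup>2"
    using Suc.IH kK by (simp add: A_def \<tau>_def S_def c_def \<xi>_def)
  define W where "W = \<xi> + (1 + c)*\<delta>*A + c*a*\<delta>"
  have W0: "W \<ge> 0" unfolding W_def \<xi>_def using c0 delta A0 apos by simp
  have "X + D'\<^sup>2 \<le> (\<xi> + (1 + c)*\<delta>*A)\<^sup>2 + (c*a*\<delta>)\<^sup>2"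
  proof -
    have eq: "(c*a*\<delta>)\<^sup>2 = c\<^sup>2*a\<^sup>2*\<delta>\<^sup>2" by (simp add: power_mult_distrib)
    have "X + D'\<^sup>2 = D'\<^sup>2 + 2*A'*(g (y (Suc k)) - g xs) + (2*\<tau>/3)*S + (2*\<tau>/3)* ss lam x y (Suc k)"
      unfolding X_def by (simp add: algebra_simps)
    then show ?thesis using S1[folded D'_def] Y IH eq by linarith
  qed
  also have "\<dots> \<le> W\<^sup>2"
  proof -
    have "0 \<le> 2 * (\<xi> + (1 + c)*\<delta>*A) * (c*a*\<delta>)" using c0 delta A0 apos unfolding \<xi>_def by simp
    then show ?thesis unfolding W_def by (simp add: power2_eq_square algebra_simps)
  qed
  finally have XW: "X + D'\<^sup>2 \<le> W\<^sup>2" .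
  have X0: "X \<ge> 0"
  proof -
    have "S \<ge> 0" unfolding S_def using posk by (intro sum_nonneg ss_nonneg) auto
    moreover have "ss lam x y (Suc k) \<ge> 0" using posk by (intro ss_nonneg) auto
    moreover have "g (y (Suc k)) - g xs \<ge> 0" using minimizer by simp
    ultimately show ?thesis unfolding X_def using A'pos tau by simp
  qed
  have Dle: "norm (x (Suc k) - xs) \<le> D' + a * \<delta>"
  proof -
    have "x (Suc k) - xs = (x k - a *\<^sub>R v - xs) + (x (Suc k) - (x k - a *\<^sub>R v))" by simp
    then have "norm (x (Suc k) - xs) \<le> norm (x k - a *\<^sub>R v - xs) + norm (x (Suc k) - (x k - a *\<^sub>R v))"
      by (metis norm_triangle_ineq)
    then show ?thesis using xe unfolding D'_def by simp
  qed
  have fin: "X + (norm (x (Suc k) - xs))\<^sup>2 \<le> (W + a*\<delta>)\<^sup>2"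
    by (rule sq_lemma[OF X0 _ XW W0 Dle]) (use apos delta in \<open>auto simp: D'_def\<close>)
  have sumS: "(\<Sum>i\<in>{1..Suc k}. ss lam x y i) = S + ss lam x y (Suc k)"
    by (simp add: S_def)
  have "W + a*\<delta> = \<xi> + (1 + c)*\<delta>*A'" unfolding W_def AA' by (simp add: algebra_simps)
  then show ?case using fin sumS unfolding X_def
    by (simp add: \<tau>_def c_def \<xi>_def A'_def algebra_simps)
qed



lemma sum_bound:
  fixes \<alpha> \<sigma> \<mu> \<delta> AK \<xi> N E S :: real
  assumes alpha: "0 \<le> \<alpha>" "\<alpha> < 1" and sigma: "\<sigma> = (1 + \<alpha>) / 2"
    and mu: "\<mu> = 8 / sqrt (1 - \<alpha>)" and delta: "0 \<le> \<delta>" and AK: "AK > 0"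
    and xi: "\<xi> \<ge> 0" and ds: "\<delta> \<le> \<xi> / (\<mu> * AK)"
    and N: "N \<ge> 0" and E: "E \<ge> 0"
    and P: "N + E + (2*(1-\<sigma>\<^sup>2)/3) * S \<le> (\<xi> + (1 + sqrt (1 + 3*\<sigma>\<^sup>2/(1-\<sigma>\<^sup>2)))*\<delta>*AK)\<^sup>2"
  shows "S \<le> (\<mu> * \<xi> / 4)\<^sup>2"
proof -
  define u where "u = 1 - \<alpha>"
  have u: "0 < u" "u \<le> 1" using alpha by (auto simp: u_def)
  have su: "sqrt u > 0" using u by simp
  have su1: "sqrt u \<le> 1" using u by simp
  have mupos: "\<mu> > 0" using mu su by (simp add: u_def)
  have sig: "\<sigma> = 1 - u/2" using sigma by (simp add: u_def field_simps)
  define \<tau> where "\<tau> = 1 - \<sigma>\<^sup>2"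
  have tau: "\<tau> = u * (4 - u) / 4" unfolding \<tau>_def sig by (simp add: power2_eq_square field_simps)
  have taupos: "\<tau> > 0" unfolding tau using u by (intro divide_pos_pos mult_pos_pos) auto
  define c where "c = sqrt (1 + 3*\<sigma>\<^sup>2/\<tau>)"
  have s2: "\<sigma>\<^sup>2 \<le> 1"
  proof -
    have "0 \<le> \<sigma>" "\<sigma> \<le> 1" using sig u by auto
    then show ?thesis by (simp add: power_le_one)
  qed
  have c2: "c\<^sup>2 = 1 + 3*\<sigma>\<^sup>2/\<tau>" unfolding c_def using taupos by simp
  have c0: "c \<ge> 0" unfolding c_def using taupos by simp
  have "c\<^sup>2 * u = u + 12*\<sigma>\<^sup>2/(4 - u)" unfolding c2 tau using u by (simp add: field_simps)
  also have "\<dots> \<le> 1 + 12*1/3"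
  proof -
    have "12*\<sigma>\<^sup>2/(4 - u) \<le> 12*1/3" using s2 u by (intro frac_le) auto
    then show ?thesis using u by linarith
  qed
  finally have c2u: "c\<^sup>2 * u \<le> 5" by simp
  have "(c * sqrt u)\<^sup>2 = c\<^sup>2 * u" using u by (simp add: power_mult_distrib)
  moreover have "(56/25::real)\<^sup>2 = 3136/625" by (simp add: power2_eq_square)
  ultimately have "(c * sqrt u)\<^sup>2 \<le> (56/25)\<^sup>2" using c2u by linarith
  then have csu: "c * sqrt u \<le> 56/25" by (rule power2_le_imp_le) simp
  have "(1 + c) * sqrt u = sqrt u + c * sqrt u" by (simp add: distrib_right)
  then have "(1 + c) * sqrt u \<le> 81/25" using csu su1 by linarith
  have dA: "\<delta> * AK \<le> \<xi> * sqrt u / 8"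
  proof -
    have "\<delta> * AK \<le> \<xi> / (\<mu> * AK) * AK" using ds AK by (intro mult_right_mono) auto
    also have "\<dots> = \<xi> / \<mu>" using AK by simp
    also have "\<dots> = \<xi> * sqrt u / 8" using mu by (simp add: u_def)
    finally show ?thesis .
  qed
  have q: "(1 + c) * \<delta> * AK \<le> 81/200 * \<xi>"
  proof -
    have "(1 + c) * \<delta> * AK = (1 + c) * (\<delta> * AK)" by simp
    also have "\<dots> \<le> (1 + c) * (\<xi> * sqrt u / 8)" using dA c0 by (intro mult_left_mono) auto
    also have "\<dots> = ((1 + c) * sqrt u) * \<xi> / 8" by simp
    also have "\<dots> \<le> (81/25) * \<xi> / 8" using \<open>(1 + c) * sqrt u \<le> 81/25\<close> xi
      by (intro divide_right_mono mult_right_mono) auto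
    finally show ?thesis by simp
  qed
  have q0: "(1 + c) * \<delta> * AK \<ge> 0" using c0 delta AK by simp
  have "(2*\<tau>/3) * S \<le> (\<xi> + (1 + c)*\<delta>*AK)\<^sup>2" using P N E unfolding c_def \<tau>_def by linarith
  also have "\<dots> \<le> (281/200 * \<xi>)\<^sup>2" using q q0 xi by (intro power_mono) auto
  also have "\<dots> = (281/200)\<^sup>2 * \<xi>\<^sup>2" by (rule power_mult_distrib)
  finally have h: "(2*\<tau>/3) * S \<le> (281/200)\<^sup>2 * \<xi>\<^sup>2" .
  have "S \<le> (3/(2*\<tau>)) * ((281/200)\<^sup>2 * \<xi>\<^sup>2)"
    using h taupos by (simp add: field_simps)
  also have "\<dots> \<le> (4/u) * \<xi>\<^sup>2"
  proof -
    have "3/(2*\<tau>) * (281/200)\<^sup>2 \<le> 4/u"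
      unfolding tau using u by (simp add: field_simps power2_eq_square)
    from mult_right_mono[OF this, of "\<xi>\<^sup>2"] show ?thesis by (simp add: mult.assoc)
  qed
  also have "\<dots> = (\<mu> * \<xi> / 4)\<^sup>2" using mu u by (simp add: u_def power_mult_distrib power_divide)
  finally show ?thesis .
qed



lemma sum_a_tel: "(\<Sum>i\<in>{Suc j..j+n}. acc_a lam i) = acc_A lam (j+n) - acc_A lam j"
proof (induction n)
  case 0 then show ?case by simp
next
  case (Suc n)
  have "(\<Sum>i\<in>{Suc j..j + Suc n}. acc_a lam i) = (\<Sum>i\<in>{Suc j..j+n}. acc_a lam i) + acc_a lam (Suc (j+n))"
    by (simp add: sum.cl_ivl_Suc)
  then show ?case using Suc by simp
qed

lemma sqrt_tel: assumes "\<forall>i\<in>{1..j+n}. lam i > 0"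
  shows "sqrt (acc_A lam (j+n)) \<ge> sqrt (acc_A lam j) + (\<Sum>i\<in>{Suc j..j+n}. sqrt (lam i)) / 2"
  using assms
proof (induction n)
  case 0 then show ?case by simp
next
  case (Suc n)
  have h: "\<forall>i\<in>{1..j+n}. lam i > 0" using Suc.prems by auto
  have eq: "j + Suc n = Suc (j + n)" by simp
  have "(\<Sum>i\<in>{Suc j..Suc (j + n)}. sqrt (lam i)) = (\<Sum>i\<in>{Suc j..j+n}. sqrt (lam i)) + sqrt (lam (Suc (j+n)))"
    by (simp add: sum.cl_ivl_Suc)
  moreover have "sqrt (acc_A lam (Suc (j+n))) \<ge> sqrt (acc_A lam (j+n)) + sqrt (lam (Suc (j+n))) / 2"
    using Suc.prems A_nonneg[OF h] by (intro sqrt_step) auto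
  ultimately show ?case using Suc.IH[OF h] unfolding eq by linarith
qed

lemma tangent_inv: fixes a t :: real assumes "a > 0" "t > 0"
  shows "1/a\<^sup>2 \<ge> 3/t\<^sup>2 - 2*a/t^3"
proof -
  have "1/a\<^sup>2 - (3/t\<^sup>2 - 2*a/t^3) = (t - a)\<^sup>2 * (t + 2*a) / (a\<^sup>2 * t^3)"
    using assms by (simp add: field_simps power2_eq_square power3_eq_cube)
  also have "\<dots> \<ge> 0" using assms by simp
  finally show ?thesis by simp
qed

lemma cube_lemma: fixes b N :: nat assumes "N \<ge> 3" "256 * b^3 \<le> 9 * N^3" shows "2*b + 2 \<le> N"
proof (rule ccontr)
  assume "\<not> ?thesis"
  then have N: "N \<le> 2*b+1" by simp
  then have b1: "b \<ge> 1" using assms by simp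
  have "N^3 \<le> (2*b+1)^3" using N by (rule power_mono) simp
  moreover have "(2*b+1)^3 = 8*b^3 + 12*b^2 + 6*b + 1" by (simp add: power3_eq_cube power2_eq_square algebra_simps)
  moreover have "b^2 \<le> b^3" "b \<le> b^3" "1 \<le> b^3" using b1
    by (auto simp: power2_eq_square power3_eq_cube)
  ultimately show False using assms(2) by linarith
qed



lemma comb:
  fixes lam r :: "nat \<Rightarrow> real" and \<omega> :: "real \<Rightarrow> real" and k J :: nat and \<Theta> :: real
  assumes pos: "\<forall>i\<in>{1..k}. lam i > 0" and r0: "\<forall>i. r i \<ge> 0" and \<Theta>: "\<Theta> \<ge> 0"
    and sb: "(\<Sum>i\<in>{1..k}. acc_A lam i * (r i)\<^sup>2 / lam i) \<le> \<Theta>\<^sup>2"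
    and omega_pos: "\<forall>t\<ge>0. \<omega> t > 0" and omega_mono: "mono_on {0..} \<omega>"
    and ll: "\<forall>i\<in>{1..k}. lam i \<ge> 1 / (2 * \<omega> (r i))"
    and J: "0 < J" "2 * J < k"
  shows "acc_A lam k \<ge> min (4^J / (2 * \<omega> \<Theta>))
           ((real k / real J)\<^sup>2 / (32 * \<omega> (16 * \<Theta> / (real k / real J) powr (3/2))))"
proof -
  define A where "A = acc_A lam"
  define s where "s i = A i * (r i)\<^sup>2 / lam i" for i
  have posr: "\<forall>i\<in>{1..j}. lam i > 0" if "j \<le> k" for j using pos that by auto
  have A0: "A i \<ge> 0" if "i \<le> k" for i unfolding A_def using posr[OF that] by (rule A_nonneg)
  have Apos: "A i > 0" if "1 \<le> i" "i \<le> k" for i unfolding A_def using posr[OF that(2)] that(1) by (rule A_pos)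
  have Amono: "A i \<le> A j" if "i \<le> j" "j \<le> k" for i j unfolding A_def using pos that by (intro A_mono) auto
  have s0: "s i \<ge> 0" if "i \<in> {1..k}" for i
  proof -
    have "lam i > 0" "A i \<ge> 0" using pos that A0[of i] by auto
    then show ?thesis unfolding s_def by (intro divide_nonneg_pos mult_nonneg_nonneg) auto
  qed
  have sb': "sum s {1..k} \<le> \<Theta>\<^sup>2" using sb by (simp add: s_def A_def)
  have ssub: "sum s B \<le> \<Theta>\<^sup>2" if "B \<subseteq> {1..k}" for B
    using sum_mono2[OF _ that, of s] s0 sb' by force
  have mono: "\<omega> p \<le> \<omega> q" if "0 \<le> p" "p \<le> q" for p q
    using omega_mono that unfolding mono_on_def by auto
  have lamge: "lam i \<ge> 1 / (2 * \<omega> t)" if "i \<in> {1..k}" "r i \<le> t" for i t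
  proof -
    have "\<omega> (r i) > 0" using omega_pos r0 by auto
    moreover have "\<omega> (r i) \<le> \<omega> t" using mono r0 that by auto
    ultimately have "1 / (2 * \<omega> t) \<le> 1 / (2 * \<omega> (r i))" by (intro divide_left_mono) auto
    then show ?thesis using ll that by fastforce
  qed
  define m where "m = real k / real J"
  have Jr: "real J > 0" using J by simp
  have m2: "m > 2" unfolding m_def using J Jr by (simp add: field_simps)
  define N where "N = nat \<lceil>m\<rceil>"
  have N1: "real N \<ge> m" unfolding N_def using m2 by linarith
  have N2: "real N < m + 1" unfolding N_def using m2 by linarith
  have N3: "N \<ge> 3" unfolding N_def using m2 by linarith
  have NJ: "(N - 1) * J < k"
  proof -
    have "real (N - 1) < m" using N2 N3 by (simp add: of_nat_diff)
    then have "real (N - 1) * real J < real k" unfolding m_def using Jr by (simp add: field_simps)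
    then show ?thesis by (metis of_nat_less_iff of_nat_mult)
  qed
  have k1: "1 \<le> k" using J by simp
  define c0 where "c0 = 1 / (2 * \<omega> \<Theta>)"
  have A1: "A 1 \<ge> c0"
  proof -
    have l1: "lam 1 > 0" using pos k1 by auto
    have A1e: "A 1 = lam 1" unfolding A_def using l1 by (rule A_one)
    have "s 1 = (r 1)\<^sup>2" unfolding s_def A1e using l1 by simp
    moreover have "s 1 \<le> \<Theta>\<^sup>2" using ssub[of "{1}"] k1 by simp
    ultimately have "(r 1)\<^sup>2 \<le> \<Theta>\<^sup>2" by simp
    then have "r 1 \<le> \<Theta>" using \<Theta> by (rule power2_le_imp_le)
    then have "lam 1 \<ge> c0" unfolding c0_def using lamge[of 1 \<Theta>] k1 by auto
    then show ?thesis using A1e by simp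
  qed
  show ?thesis
  proof (cases "A k \<ge> 4^J * c0")
    case True
    then show ?thesis unfolding A_def c0_def by (simp add: min_le_iff_disj)
  next
    case False
    have "\<exists>j. 1 \<le> j \<and> j + (N-1) \<le> k \<and> A (j + (N-1)) < 4 * A j"
    proof (rule ccontr)
      assume H0: "\<not> ?thesis"
      have H: "4 * A j' \<le> A (j' + (N-1))" if "1 \<le> j'" "j' + (N-1) \<le> k" for j'
        using H0 that by (meson not_less)
      have "A (1 + t*(N-1)) \<ge> 4^t * A 1" if "t \<le> J" for t
        using that
      proof (induction t)
        case 0 then show ?case by simp
      next
        case (Suc t)
        have "(t + 1) * (N - 1) \<le> J * (N - 1)" using Suc.prems by (intro mult_right_mono) auto
        moreover have "(t + 1) * (N - 1) = t * (N - 1) + (N - 1)" by (simp only: distrib_right mult_1)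
        moreover have "J * (N - 1) < k" using NJ by (simp only: mult.commute)
        ultimately have b: "1 + t*(N-1) + (N-1) \<le> k" by linarith
        have eq: "1 + t*(N-1) + (N-1) = 1 + Suc t * (N-1)" by (simp add: add.commute)
        have "4^(Suc t) * A 1 = 4 * (4^t * A 1)" by simp
        also have "\<dots> \<le> 4 * A (1 + t*(N-1))" using Suc by simp
        also have "\<dots> \<le> A (1 + t*(N-1) + (N-1))" using H[OF _ b] by simp
        also have "\<dots> = A (1 + Suc t * (N-1))" by (simp only: eq)
        finally show ?case .
      qed
      then have "A (1 + J*(N-1)) \<ge> 4^J * A 1" by simp
      moreover have "A k \<ge> A (1 + J*(N-1))" using NJ by (intro Amono) (auto simp: mult.commute)
      moreover have "4^J * A 1 \<ge> 4^J * c0" using A1 by simp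
      ultimately show False using False by linarith
    qed
    then obtain j where j1: "1 \<le> j" and jk: "j + (N-1) \<le> k" and jq: "A (j + (N-1)) < 4 * A j" by blast
    define n where "n = N - 1"
    define I where "I = {Suc j..j+n}"
    define \<theta> where "\<theta> = 16 * \<Theta> / m powr (3/2)"
    define ell where "ell = 1 / (2 * \<omega> \<theta>)"
    define B where "B = {i\<in>I. r i > \<theta>}"
    define Gs where "Gs = I - B"
    have mp: "m powr (3/2) > 0" using m2 by simp
    have \<theta>0: "\<theta> \<ge> 0" unfolding \<theta>_def using \<Theta> mp by simp
    have Isub: "I \<subseteq> {1..k}" unfolding I_def using jk n_def by auto
    have finI: "finite I" unfolding I_def by simp
    have cardI: "card I = n" unfolding I_def by simp
    have BI: "B \<subseteq> I" unfolding B_def by auto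
    have finB: "finite B" using finI BI finite_subset by blast
    have jpos: "A j > 0" using Apos j1 jk by simp
    have Bcard: "2 * card B + 2 \<le> N"
    proof (cases "B = {}")
      case True then show ?thesis using N3 by simp
    next
      case False
      define b where "b = card B"
      have b1: "b \<ge> 1" using False finB unfolding b_def by (simp add: Suc_le_eq card_gt_0_iff)
      have ai: "acc_a lam i > 0 \<and> (acc_a lam i)\<^sup>2 = lam i * A i \<and> A i \<ge> A j \<and> i \<in> {1..k}" if "i \<in> I" for i
      proof -
        define i' where "i' = i - 1"
        have i': "i = Suc i'" "j \<le> i'" using that unfolding I_def i'_def by auto
        have ik: "i \<le> k" using that Isub by auto
        have lp: "lam (Suc i') > 0" using pos ik i' by auto
        have A'0: "acc_A lam i' \<ge> 0" using A0[of i'] ik i' by (simp add: A_def)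
        show ?thesis using a_pos[OF lp A'0] a_sq[OF lp A'0] Amono[of j i] ik i' that Isub
          by (auto simp: A_def)
      qed
      have sB: "s i \<ge> (A j)\<^sup>2 * \<theta>\<^sup>2 / (acc_a lam i)\<^sup>2" if "i \<in> B" for i
      proof -
        have iI: "i \<in> I" using that BI by auto
        note h = ai[OF iI]
        have lp: "lam i > 0" using pos h by auto
        have Ai: "A i > 0" using h jpos by linarith
        have eqs: "s i = (A i)\<^sup>2 * (r i)\<^sup>2 / (acc_a lam i)\<^sup>2"
          unfolding s_def using h Ai lp by (simp add: power2_eq_square field_simps)
        have le: "(A j)\<^sup>2 * \<theta>\<^sup>2 \<le> (A i)\<^sup>2 * (r i)\<^sup>2"
        proof -
          have "r i > \<theta>" using that unfolding B_def by auto
          then have "\<theta>\<^sup>2 \<le> (r i)\<^sup>2" using \<theta>0 by (intro power_mono) auto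
          moreover have "(A j)\<^sup>2 \<le> (A i)\<^sup>2" using h jpos by (intro power_mono) auto
          ultimately show ?thesis by (intro mult_mono) auto
        qed
        have "(A j)\<^sup>2 * \<theta>\<^sup>2 / (acc_a lam i)\<^sup>2 \<le> (A i)\<^sup>2 * (r i)\<^sup>2 / (acc_a lam i)\<^sup>2"
          by (rule divide_right_mono[OF le]) simp
        then show ?thesis using eqs by linarith
      qed
      have \<Theta>pos: "\<Theta> > 0"
      proof (rule ccontr)
        assume "\<not> \<Theta> > 0"
        then have z: "\<Theta> = 0" using \<Theta> by simp
        obtain i where iB: "i \<in> B" using False by auto
        have iI: "i \<in> I" using iB BI by auto
        note h = ai[OF iI]
        have "r i > 0" using iB z unfolding B_def \<theta>_def by auto
        moreover have "A i > 0" using h jpos by linarith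
        moreover have "lam i > 0" using pos h by auto
        ultimately have "s i > 0" unfolding s_def by simp
        moreover have "s i \<le> \<Theta>\<^sup>2" using ssub[of "{i}"] h by simp
        ultimately show False using z by simp
      qed
      have sumaB: "(\<Sum>i\<in>B. acc_a lam i) \<le> 3 * A j"
      proof -
        have "(\<Sum>i\<in>B. acc_a lam i) \<le> (\<Sum>i\<in>I. acc_a lam i)"
          using BI finI ai by (intro sum_mono2) (auto intro: less_imp_le)
        also have "\<dots> = A (j + n) - A j" unfolding I_def A_def by (rule sum_a_tel)
        finally show ?thesis using jq n_def by simp
      qed
      define t where "t = 3 * A j / b"
      have tpos: "t > 0" unfolding t_def using jpos b1 by simp
      have "(\<Sum>i\<in>B. 1 / (acc_a lam i)\<^sup>2) \<ge> (\<Sum>i\<in>B. 3 / t\<^sup>2 - 2 * acc_a lam i / t^3)"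
        using ai BI tangent_inv tpos by (intro sum_mono) auto
      moreover have "(\<Sum>i\<in>B. 3 / t\<^sup>2 - 2 * acc_a lam i / t^3) = 3 * b / t\<^sup>2 - 2 * (\<Sum>i\<in>B. acc_a lam i) / t^3"
        by (simp add: sum_subtractf sum_divide_distrib[symmetric] sum_distrib_left[symmetric] b_def)
      moreover have "2 * (\<Sum>i\<in>B. acc_a lam i) / t^3 \<le> 2 * (3 * A j) / t^3"
        using sumaB tpos by (intro divide_right_mono) auto
      moreover have "3 * b / t\<^sup>2 - 2 * (3 * A j) / t^3 = b^3 / (9 * (A j)\<^sup>2)"
        unfolding t_def using jpos b1 by (simp add: field_simps power2_eq_square power3_eq_cube)
      ultimately have inv: "(\<Sum>i\<in>B. 1 / (acc_a lam i)\<^sup>2) \<ge> b^3 / (9 * (A j)\<^sup>2)" by linarith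
      have "\<Theta>\<^sup>2 \<ge> sum s B" using ssub BI Isub by auto
      also have "sum s B \<ge> (\<Sum>i\<in>B. (A j)\<^sup>2 * \<theta>\<^sup>2 * (1 / (acc_a lam i)\<^sup>2))"
        using sB by (intro sum_mono) simp
      finally have "\<Theta>\<^sup>2 \<ge> (A j)\<^sup>2 * \<theta>\<^sup>2 * (\<Sum>i\<in>B. 1 / (acc_a lam i)\<^sup>2)"
        by (simp add: sum_distrib_left)
      moreover have "(A j)\<^sup>2 * \<theta>\<^sup>2 * (\<Sum>i\<in>B. 1 / (acc_a lam i)\<^sup>2) \<ge> (A j)\<^sup>2 * \<theta>\<^sup>2 * (b^3 / (9 * (A j)\<^sup>2))"
        using inv by (intro mult_left_mono) auto
      moreover have "(A j)\<^sup>2 * \<theta>\<^sup>2 * (b^3 / (9 * (A j)\<^sup>2)) = \<theta>\<^sup>2 * b^3 / 9"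
        using jpos by simp
      moreover have th2: "\<theta>\<^sup>2 = 256 * \<Theta>\<^sup>2 / m^3"
      proof -
        have "(m powr (3/2))\<^sup>2 = m powr (3/2 + 3/2)"
          unfolding power2_eq_square by (rule powr_add[symmetric])
        also have "\<dots> = m powr (real 3)" by simp
        also have "\<dots> = m^3" using m2 by (intro powr_realpow) simp
        finally have "(m powr (3/2))\<^sup>2 = m^3" .
        then show ?thesis unfolding \<theta>_def by (simp add: power_divide power_mult_distrib)
      qed
      ultimately have "256 * \<Theta>\<^sup>2 / m^3 * b^3 / 9 \<le> \<Theta>\<^sup>2" by simp
      then have "256 * b^3 \<le> 9 * m^3" using \<Theta>pos m2 by (simp add: field_simps)
      also have "\<dots> \<le> 9 * (real N)^3" using N1 m2 by (intro mult_left_mono power_mono) auto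
      finally have "real (256 * b^3) \<le> real (9 * N^3)" by simp
      then have "256 * b^3 \<le> 9 * N^3" by (simp only: of_nat_le_iff)
      then show ?thesis using cube_lemma[OF N3] unfolding b_def by simp
    qed
    have cardG: "real (card Gs) \<ge> m / 2"
    proof -
      have "card Gs = n - card B" unfolding Gs_def using BI finB cardI by (simp add: card_Diff_subset)
      then have "real (card Gs) = real N - 1 - real (card B)" using Bcard n_def by (simp add: of_nat_diff)
      then show ?thesis using Bcard N1 by linarith
    qed
    have Gl: "sqrt (lam i) \<ge> sqrt ell" if "i \<in> Gs" for i
    proof -
      have "r i \<le> \<theta>" "i \<in> {1..k}" using that Isub unfolding Gs_def B_def by auto
      then show ?thesis unfolding ell_def using lamge by simp
    qed
    have ellnn: "ell \<ge> 0" unfolding ell_def using omega_pos \<theta>0 by (simp add: less_imp_le)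
    have lpos: "\<forall>i\<in>{1..j+n}. lam i > 0" using pos jk n_def by auto
    have "sqrt (A (j+n)) \<ge> sqrt (A j) + (\<Sum>i\<in>I. sqrt (lam i)) / 2"
      unfolding A_def I_def by (rule sqrt_tel[OF lpos])
    moreover have "(\<Sum>i\<in>I. sqrt (lam i)) \<ge> (\<Sum>i\<in>Gs. sqrt (lam i))"
      using finI Isub pos unfolding Gs_def by (intro sum_mono2) (auto intro: less_imp_le)
    moreover have "(\<Sum>i\<in>Gs. sqrt (lam i)) \<ge> real (card Gs) * sqrt ell"
      by (rule sum_bounded_below) (rule Gl)
    moreover have "real (card Gs) * sqrt ell \<ge> m / 2 * sqrt ell"
      using cardG ellnn by (intro mult_right_mono) auto
    moreover have "sqrt (A j) \<ge> 0" using jpos by simp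
    ultimately have sq: "sqrt (A (j+n)) \<ge> m / 4 * sqrt ell" by linarith
    have "A (j+n) = (sqrt (A (j+n)))\<^sup>2" using A0[of "j+n"] jk n_def by simp
    also have "\<dots> \<ge> (m / 4 * sqrt ell)\<^sup>2" using sq m2 ellnn by (intro power_mono) auto
    finally have "A (j+n) \<ge> m\<^sup>2 / 16 * ell" using ellnn by (simp add: power_mult_distrib power_divide)
    then have "A (j+n) \<ge> m\<^sup>2 / (32 * \<omega> \<theta>)" unfolding ell_def by simp
    moreover have "A k \<ge> A (j+n)" using jk n_def by (intro Amono) auto
    ultimately show ?thesis unfolding A_def m_def \<theta>_def by (simp add: min_le_iff_disj)
  qed
qed


theorem mainTheorem15:
  fixes g :: "'a::euclidean_space \<Rightarrow> real" and G :: "'a \<Rightarrow> 'a"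
    and \<alpha> \<sigma> \<rho> \<mu> \<delta> :: real and K :: nat
    and lam :: "nat \<Rightarrow> real" and x y :: "nat \<Rightarrow> 'a" and xs :: 'a
    and \<omega> :: "real \<Rightarrow> real"
  assumes alpha: "0 \<le> \<alpha>" "\<alpha> < 1"
    and sigma: "\<sigma> = (1 + \<alpha>) / 2"
    and rho: "\<rho> = (1 - \<alpha>) / (1 - \<sigma>)"
    and mu: "\<mu> = 8 / sqrt (1 - \<alpha>)"
    and omega_pos: "\<forall>t\<ge>0. \<omega> t > 0"
    and omega_mono: "mono_on {0..} \<omega>"
    and convex: "convex_on UNIV g"
    and grad: "\<forall>z. (g has_derivative (\<lambda>h. G z \<bullet> h)) (at z)"
    and minimizer: "\<forall>z. g xs \<le> g z"
    and delta: "0 \<le> \<delta>"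
    and K: "1 \<le> K"
    and framework: "acc_framework G \<sigma> \<delta> K lam x y"
    and delta_small: "\<delta> \<le> norm xs / (\<mu> * acc_A lam K)"
    and lam_lower: "\<forall>k\<in>{1..K}. lam k \<ge> 1 / (\<rho> * \<omega> (norm (y k - acc_xt lam x y (k - 1))))"
  shows "(\<forall>k\<in>{1..K}. \<forall>J::nat. 0 < J \<and> real J < real k / 2 \<longrightarrow>
            acc_A lam k \<ge> min (4 ^ J / (\<rho> * \<omega> (\<mu> * norm xs / 4)))
              ((real k / real J)\<^sup>2 /
                 (16 * \<rho> * \<omega> (4 * \<mu> * norm xs / (real k / real J) powr (3/2)))))
       \<and> (\<forall>R. norm xs \<le> R \<longrightarrow> (\<forall>k\<in>{1..K}. acc_A lam k \<ge> 1 / (2 * \<omega> (2 * \<mu> * R))))"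
proof -
  have pos: "\<forall>i\<in>{1..K}. lam i > 0" using framework by (simp add: acc_framework_def)
  have rho2: "\<rho> = 2"
  proof -
    have "1 - \<sigma> = (1 - \<alpha>) / 2" using sigma by (simp add: field_simps)
    moreover have "1 - \<alpha> \<noteq> 0" using alpha by simp
    ultimately show ?thesis unfolding rho by (simp only:) (simp add: field_simps)
  qed
  have sig: "0 \<le> \<sigma>" "\<sigma> < 1" using sigma alpha by auto
  have mupos: "\<mu> > 0" using mu alpha by simp
  have AK: "acc_A lam K > 0" using pos K by (rule A_pos)
  define \<xi> where "\<xi> = norm xs"
  define S where "S = (\<Sum>i\<in>{1..K}. ss lam x y i)"
  have P: "(norm (x K - xs))\<^sup>2 + 2*acc_A lam K*(g (y K) - g xs)
      + (2*(1-\<sigma>\<^sup>2)/3) * S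
      \<le> (norm xs + (1 + sqrt (1 + 3*\<sigma>\<^sup>2/(1-\<sigma>\<^sup>2)))*\<delta>*acc_A lam K)\<^sup>2"
    unfolding S_def by (rule potential[OF sig delta convex grad minimizer framework]) simp
  have E0: "2*acc_A lam K*(g (y K) - g xs) \<ge> 0" using AK minimizer by simp
  have SK: "S \<le> (\<mu> * \<xi> / 4)\<^sup>2"
    using sum_bound[OF alpha sigma mu delta AK _ delta_small _ E0 P] by (simp add: \<xi>_def)
  define r where "r i = norm (y i - acc_xt lam x y (i - 1))" for i
  have r0: "\<forall>i. r i \<ge> 0" by (simp add: r_def)
  have ssnn: "ss lam x y i \<ge> 0" if "i \<in> {1..K}" for i
    using pos that by (intro ss_nonneg) auto
  have sumk: "(\<Sum>i\<in>{1..k}. acc_A lam i * (r i)\<^sup>2 / lam i) \<le> (\<mu> * \<xi> / 4)\<^sup>2" if "k \<le> K" for k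
  proof -
    have "(\<Sum>i\<in>{1..k}. acc_A lam i * (r i)\<^sup>2 / lam i) = (\<Sum>i\<in>{1..k}. ss lam x y i)"
      by (simp add: ss_def r_def)
    also have "\<dots> \<le> S" unfolding S_def using that ssnn by (intro sum_mono2) auto
    finally show ?thesis using SK by simp
  qed
  have ll: "\<forall>i\<in>{1..K}. lam i \<ge> 1 / (2 * \<omega> (r i))" using lam_lower rho2 by (simp add: r_def)
  have \<Theta>0: "\<mu> * \<xi> / 4 \<ge> 0" using mupos by (simp add: \<xi>_def)
  have part1: "acc_A lam k \<ge> min (4 ^ J / (\<rho> * \<omega> (\<mu> * norm xs / 4)))
              ((real k / real J)\<^sup>2 /
                 (16 * \<rho> * \<omega> (4 * \<mu> * norm xs / (real k / real J) powr (3/2))))"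
    if k: "k \<in> {1..K}" and J: "0 < J" "real J < real k / 2" for k J
  proof -
    have J2: "2 * J < k" using J by linarith
    have posk: "\<forall>i\<in>{1..k}. lam i > 0" using pos k by auto
    have llk: "\<forall>i\<in>{1..k}. lam i \<ge> 1 / (2 * \<omega> (r i))" using ll k by auto
    have "acc_A lam k \<ge> min (4^J / (2 * \<omega> (\<mu> * \<xi> / 4)))
           ((real k / real J)\<^sup>2 / (32 * \<omega> (16 * (\<mu> * \<xi> / 4) / (real k / real J) powr (3/2))))"
      using k by (intro comb[OF posk r0 \<Theta>0 sumk omega_pos omega_mono llk J(1) J2]) auto
    moreover have "16 * (\<mu> * \<xi> / 4) = 4 * \<mu> * \<xi>" by simp
    ultimately show ?thesis unfolding rho2 \<xi>_def by (simp add: mult.assoc)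
  qed
  have part2: "acc_A lam k \<ge> 1 / (2 * \<omega> (2 * \<mu> * R))" if R: "norm xs \<le> R" and k: "k \<in> {1..K}" for R k
  proof -
    have l1: "lam 1 > 0" using pos K by auto
    have A1: "acc_A lam 1 = lam 1" using l1 by (rule A_one)
    have "ss lam x y 1 = (r 1)\<^sup>2" unfolding ss_def r_def[symmetric] A1 using l1 by simp
    moreover have "ss lam x y 1 \<le> S" unfolding S_def using ssnn K by (intro member_le_sum) auto
    ultimately have "(r 1)\<^sup>2 \<le> (\<mu> * \<xi> / 4)\<^sup>2" using SK by simp
    then have r1: "r 1 \<le> \<mu> * \<xi> / 4" using \<Theta>0 by (rule power2_le_imp_le)
    have "\<mu> * \<xi> / 4 \<le> 2 * \<mu> * R" using R mupos by (simp add: \<xi>_def) (smt (verit) mult_left_mono norm_ge_zero)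
    then have h: "r 1 \<le> 2 * \<mu> * R" using r1 by linarith
    have "0 \<le> r 1" using r0 by simp
    moreover have "0 \<le> 2 * \<mu> * R" using h \<open>0 \<le> r 1\<close> by linarith
    ultimately have "r 1 \<in> {0..}" "2 * \<mu> * R \<in> {0..}" by auto
    then have "\<omega> (r 1) \<le> \<omega> (2 * \<mu> * R)" using omega_mono h unfolding mono_on_def by blast
    moreover have "\<omega> (r 1) > 0" using omega_pos r0 by auto
    ultimately have "1 / (2 * \<omega> (2 * \<mu> * R)) \<le> 1 / (2 * \<omega> (r 1))" by (intro divide_left_mono) auto
    also have "\<dots> \<le> lam 1" using ll K by auto
    also have "\<dots> = acc_A lam 1" using A1 by simp
    also have "\<dots> \<le> acc_A lam k" using pos k by (intro A_mono) auto
    finally show ?thesis .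
  qed
  show ?thesis using part1 part2 by blast
qed

end
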